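(* Let $G$ be a connected planar graph. Then every minimal $2$-contraction $H$ of $G$ either contains a non-damaged vertex of degree at most $4$, or is $3$-connected.
   Context: All graphs are finite, simple and undirected. A graph $H$ on at least $3$ vertices, together with an edge $u_1u_2\in E(H)$, is a $2$-contraction of $G$ with damaged vertices $u_1,u_2$ if $H\setminus u_1u_2$ (the graph $H$ with the edge $u_1u_2$ removed) is a subgraph of $G$, every vertex $v\in V(H)\setminus\{u_1,u_2\}$ satisfies $d_H(v)=d_G(v)$, and there exists a $(u_1,u_2)$-path in $G$ all of whose internal vertices lie in $V(G)\setminus V(H)$. The non-damaged vertices of $H$ are those of $V(H)\setminus\{u_1,u_2\}$. A $2$-contraction $H'$ of $G$ is smaller than a $2$-contraction $H$ with damaged vertices $\{u_1,u_2\}$ if $V(H')\subsetneq V(H)$ and each of $u_1,u_2$ either does not belong to $V(H')$ or is a damaged vertex of $H'$. A $2$-contraction $H$ of $G$ is minimal if $G$ admits no $2$-contraction smaller than $H$. *)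

theory Defs
  imports "HOL-Analysis.Analysis"
begin

definition sgraph :: "'a set \<Rightarrow> 'a set set \<Rightarrow> bool" where
  "sgraph V E \<longleftrightarrow> finite V \<and> (\<forall>e\<in>E. e \<subseteq> V \<and> card e = 2)"

definition degree :: "'a set set \<Rightarrow> 'a \<Rightarrow> nat" where
  "degree E v = card {e\<in>E. v \<in> e}"

definition is_path :: "'a set \<Rightarrow> 'a set set \<Rightarrow> 'a list \<Rightarrow> 'a \<Rightarrow> 'a \<Rightarrow> bool" where
  "is_path V E xs u v \<longleftrightarrow> xs \<noteq> [] \<and> hd xs = u \<and> last xs = v \<and> distinct xs \<and>
     set xs \<subseteq> V \<and> (\<forall>i. Suc i < length xs \<longrightarrow> {xs ! i, xs ! Suc i} \<in> E)"

definition connected_graph :: "'a set \<Rightarrow> 'a set set \<Rightarrow> bool" where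
  "connected_graph V E \<longleftrightarrow> V \<noteq> {} \<and> (\<forall>u\<in>V. \<forall>v\<in>V. \<exists>xs. is_path V E xs u v)"

definition k_connected :: "nat \<Rightarrow> 'a set \<Rightarrow> 'a set set \<Rightarrow> bool" where
  "k_connected k V E \<longleftrightarrow> card V > k \<and>
     (\<forall>S. S \<subseteq> V \<and> card S < k \<longrightarrow> connected_graph (V - S) {e\<in>E. e \<inter> S = {}})"

text \<open>Planarity: an embedding in the plane (the complex plane = R^2): vertices are mapped
injectively to points, each edge {u,v} to an arc joining the images of u and v that meets
the image of V only at its endpoints, and the arcs of two distinct edges only meet in
images of common endpoints.\<close>

definition planar :: "'a set \<Rightarrow> 'a set set \<Rightarrow> bool" where
  "planar V E \<longleftrightarrow> (\<exists>(p :: 'a \<Rightarrow> complex) (\<gamma> :: 'a set \<Rightarrow> real \<Rightarrow> complex).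
     inj_on p V \<and>
     (\<forall>e\<in>E. arc (\<gamma> e) \<and> {pathstart (\<gamma> e), pathfinish (\<gamma> e)} = p ` e \<and>
              path_image (\<gamma> e) \<inter> p ` V = p ` e) \<and>
     (\<forall>e\<in>E. \<forall>e'\<in>E. e \<noteq> e' \<longrightarrow> path_image (\<gamma> e) \<inter> path_image (\<gamma> e') \<subseteq> p ` (e \<inter> e')))"

definition two_contraction ::
  "'a set \<Rightarrow> 'a set set \<Rightarrow> 'a set \<Rightarrow> 'a set set \<Rightarrow> 'a \<Rightarrow> 'a \<Rightarrow> bool" where
  "two_contraction V E VH EH u1 u2 \<longleftrightarrow>
     sgraph VH EH \<and> card VH \<ge> 3 \<and> u1 \<noteq> u2 \<and> {u1, u2} \<in> EH \<and>
     VH \<subseteq> V \<and> EH - {{u1, u2}} \<subseteq> E \<and>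
     (\<forall>v \<in> VH - {u1, u2}. degree EH v = degree E v) \<and>
     (\<exists>xs. is_path V E xs u1 u2 \<and> set (butlast (tl xs)) \<subseteq> V - VH)"

definition smaller_two_contraction ::
  "'a set \<Rightarrow> 'a set set \<Rightarrow> 'a set \<Rightarrow> 'a set set \<Rightarrow> 'a \<Rightarrow> 'a \<Rightarrow>
   'a set \<Rightarrow> 'a set set \<Rightarrow> 'a \<Rightarrow> 'a \<Rightarrow> bool" where
  "smaller_two_contraction V E VH' EH' w1 w2 VH EH u1 u2 \<longleftrightarrow>
     two_contraction V E VH' EH' w1 w2 \<and> VH' \<subset> VH \<and>
     (u1 \<notin> VH' \<or> u1 \<in> {w1, w2}) \<and> (u2 \<notin> VH' \<or> u2 \<in> {w1, w2})"

definition minimal_two_contraction ::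
  "'a set \<Rightarrow> 'a set set \<Rightarrow> 'a set \<Rightarrow> 'a set set \<Rightarrow> 'a \<Rightarrow> 'a \<Rightarrow> bool" where
  "minimal_two_contraction V E VH EH u1 u2 \<longleftrightarrow>
     two_contraction V E VH EH u1 u2 \<and>
     \<not> (\<exists>VH' EH' w1 w2. smaller_two_contraction V E VH' EH' w1 w2 VH EH u1 u2)"

end

theory Submission
  imports Defs
begin


definition adjr :: "'a set \<Rightarrow> 'a set set \<Rightarrow> ('a \<times> 'a) set" where
  "adjr W E = {(a,b). a \<in> W \<and> b \<in> W \<and> {a,b} \<in> E}"

lemma adjr_sym: "(a,b) \<in> adjr W E \<Longrightarrow> (b,a) \<in> adjr W E"
  by (auto simp: adjr_def insert_commute)

lemma adjr_rtrancl_sym: "(a,b) \<in> (adjr W E)\<^sup>* \<Longrightarrow> (b,a) \<in> (adjr W E)\<^sup>*"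
proof (induction rule: rtrancl_induct)
  case base then show ?case by simp
next
  case (step y z) then show ?case by (meson adjr_sym converse_rtrancl_into_rtrancl)
qed

lemma adjr_rtrancl_in: "(a,b) \<in> (adjr W E)\<^sup>* \<Longrightarrow> a \<in> W \<Longrightarrow> b \<in> W"
  by (induction rule: rtrancl_induct) (auto simp: adjr_def)

lemma adjr_closed: "(a,b) \<in> (adjr W E)\<^sup>* \<Longrightarrow> a \<in> C \<Longrightarrow>
   (\<And>v w. v \<in> C \<Longrightarrow> (v,w) \<in> adjr W E \<Longrightarrow> w \<in> C) \<Longrightarrow> b \<in> C"
  by (induction rule: rtrancl_induct) auto

lemma path_rtrancl:
  assumes "is_path W E xs u v" shows "(u,v) \<in> (adjr W E)\<^sup>*"
proof -
  have ne: "xs \<noteq> []" and sub: "set xs \<subseteq> W"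
    and ed: "\<forall>i. Suc i < length xs \<longrightarrow> {xs!i, xs!Suc i} \<in> E"
    using assms by (auto simp: is_path_def)
  have all: "i < length xs \<longrightarrow> (xs!0, xs!i) \<in> (adjr W E)\<^sup>*" for i
  proof (induction i)
    case 0 show ?case by simp
  next
    case (Suc i)
    show ?case
    proof
      assume a: "Suc i < length xs"
      then have "(xs!i, xs!Suc i) \<in> adjr W E" using sub ed
        by (auto simp: adjr_def)
      with Suc a show "(xs!0, xs!Suc i) \<in> (adjr W E)\<^sup>*" by (meson Suc_lessD rtrancl_into_rtrancl)
    qed
  qed
  have "(xs!0, xs!(length xs - 1)) \<in> (adjr W E)\<^sup>*" using all ne by simp
  moreover have "xs!0 = u" "xs!(length xs - 1) = v" using assms ne
    by (auto simp: is_path_def hd_conv_nth last_conv_nth)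
  ultimately show ?thesis by simp
qed

lemma rtrancl_path:
  assumes "(u,v) \<in> (adjr W E)\<^sup>*" "u \<in> W" shows "\<exists>xs. is_path W E xs u v"
  using assms(1)
proof (induction rule: rtrancl_induct)
  case base
  have "is_path W E [u] u u" using assms(2) by (simp add: is_path_def)
  then show ?case by blast
next
  case (step a b)
  then obtain xs where p: "is_path W E xs u a" by blast
  show ?case
  proof (cases "b \<in> set xs")
    case True
    then obtain i where i: "i < length xs" "xs!i = b" by (auto simp: in_set_conv_nth)
    have "is_path W E (take (Suc i) xs) u b"
    proof -
      have tk: "take (Suc i) xs = take i xs @ [xs!i]" using i by (simp add: take_Suc_conv_app_nth)
      have d: "distinct xs" "set xs \<subseteq> W" "hd xs = u" "xs \<noteq> []"
        and e: "\<forall>j. Suc j < length xs \<longrightarrow> {xs ! j, xs ! Suc j} \<in> E"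
        using p by (auto simp: is_path_def)
      have "take (Suc i) xs \<noteq> []" using d by simp
      moreover have "hd (take (Suc i) xs) = u" using d by simp
      moreover have "last (take (Suc i) xs) = b" using tk i by simp
      moreover have "distinct (take (Suc i) xs)" using d by simp
      moreover have "set (take (Suc i) xs) \<subseteq> W" using d by (meson in_set_takeD subset_iff)
      moreover have "\<forall>j. Suc j < length (take (Suc i) xs) \<longrightarrow>
          {take (Suc i) xs ! j, take (Suc i) xs ! Suc j} \<in> E" using e by simp
      ultimately show ?thesis unfolding is_path_def by blast
    qed
    then show ?thesis by blast
  next
    case False
    have d: "distinct xs" "set xs \<subseteq> W" "hd xs = u" "xs \<noteq> []" "last xs = a"
        and e: "\<forall>j. Suc j < length xs \<longrightarrow> {xs ! j, xs ! Suc j} \<in> E"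
        using p by (auto simp: is_path_def)
    have ab: "{a,b} \<in> E" "b \<in> W" using step(2) by (auto simp: adjr_def)
    have ee: "{(xs@[b]) ! j, (xs@[b]) ! Suc j} \<in> E" if j: "Suc j < length (xs@[b])" for j
    proof (cases "Suc j < length xs")
      case True then show ?thesis using e by (simp add: nth_append)
    next
      case False
      then have "Suc j = length xs" using j by simp
      then have "xs ! j = a" using d by (metis diff_Suc_1 last_conv_nth)
      then show ?thesis using \<open>Suc j = length xs\<close> ab by (simp add: nth_append)
    qed
    have "is_path W E (xs @ [b]) u b" using d False ab ee unfolding is_path_def by auto
    then show ?thesis by blast
  qed
qed

lemma interior_distinct:
  assumes "distinct xs" "z \<in> set (butlast (tl xs))"
  shows "z \<noteq> hd xs \<and> z \<noteq> last xs"
proof (cases xs)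
  case Nil then show ?thesis using assms by simp
next
  case (Cons a ys)
  show ?thesis
  proof (cases ys rule: rev_cases)
    case Nil then show ?thesis using assms Cons by simp
  next
    case (snoc zs l) then show ?thesis using assms Cons by auto
  qed
qed

lemma set_path_cover: "xs \<noteq> [] \<Longrightarrow> set xs \<subseteq> {hd xs, last xs} \<union> set (butlast (tl xs))"
proof (cases xs)
  case Nil then show ?thesis by simp
next
  case (Cons a ys)
  show ?thesis
  proof (cases ys rule: rev_cases)
    case Nil then show ?thesis using Cons by simp
  next
    case (snoc zs l) then show ?thesis using Cons by auto
  qed
qed

lemma rtrancl_ext_path:
  assumes "(x,y) \<in> (adjr W E)\<^sup>*" "x \<in> W" "W \<subseteq> V"
  shows "\<exists>xs. is_path V E xs x y \<and> set (butlast (tl xs)) \<subseteq> W - {x,y}"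
proof -
  obtain xs where p: "is_path W E xs x y" using rtrancl_path[OF assms(1,2)] by blast
  have "set xs \<subseteq> V" using p assms(3) unfolding is_path_def by blast
  then have "is_path V E xs x y" using p unfolding is_path_def by blast
  moreover have "set (butlast (tl xs)) \<subseteq> W - {x,y}"
  proof
    fix z assume z: "z \<in> set (butlast (tl xs))"
    then have "z \<in> set xs" by (cases xs) (auto dest: in_set_butlastD)
    then have "z \<in> W" using p unfolding is_path_def by blast
    moreover have "z \<noteq> x \<and> z \<noteq> y" using interior_distinct[OF _ z] p unfolding is_path_def by blast
    ultimately show "z \<in> W - {x,y}" by auto
  qed
  ultimately show ?thesis by blast
qed



locale setting =
  fixes V :: "'a set" and E :: "'a set set" and VH :: "'a set" and EH :: "'a set set"
    and u1 u2 :: 'a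
  assumes sg: "sgraph V E" and conn: "connected_graph V E"
    and tc: "two_contraction V E VH EH u1 u2"
    and deg5: "\<And>v. v \<in> VH - {u1,u2} \<Longrightarrow> degree EH v \<ge> 5"
begin

lemma sgH: "sgraph VH EH" using tc unfolding two_contraction_def by blast
lemma c3: "card VH \<ge> 3" using tc unfolding two_contraction_def by blast
lemma neq: "u1 \<noteq> u2" using tc unfolding two_contraction_def by blast
lemma uE: "{u1,u2} \<in> EH" using tc unfolding two_contraction_def by blast
lemma VHV: "VH \<subseteq> V" using tc unfolding two_contraction_def by blast
lemma EHE: "EH - {{u1,u2}} \<subseteq> E" using tc unfolding two_contraction_def by blast
lemma degeq: "v \<in> VH - {u1,u2} \<Longrightarrow> degree EH v = degree E v"
  using tc unfolding two_contraction_def by blast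
lemma Pth: "\<exists>xs. is_path V E xs u1 u2 \<and> set (butlast (tl xs)) \<subseteq> V - VH"
  using tc unfolding two_contraction_def by blast

lemma finV: "finite V" using sg unfolding sgraph_def by blast
lemma finVH: "finite VH" using sgH unfolding sgraph_def by blast
lemma finE: "finite E"
proof -
  have "E \<subseteq> Pow V" using sg unfolding sgraph_def by blast
  then show ?thesis using finV by (meson finite_Pow_iff finite_subset)
qed

lemma edge_form:
  assumes "e \<in> EH" "v \<in> e" shows "\<exists>w. w \<noteq> v \<and> e = {v,w} \<and> w \<in> VH \<and> v \<in> VH"
proof -
  have "e \<subseteq> VH" "card e = 2" using sgH assms(1) unfolding sgraph_def by auto
  then obtain a b where ab: "e = {a,b}" "a \<noteq> b" by (meson card_2_iff)
  show ?thesis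
  proof (cases "v = a")
    case True then show ?thesis using ab \<open>e \<subseteq> VH\<close> by auto
  next
    case False then have "v = b" using ab assms(2) by auto
    then show ?thesis using ab \<open>e \<subseteq> VH\<close> by auto
  qed
qed

lemma EH_E: "e \<in> EH \<Longrightarrow> e \<noteq> {u1,u2} \<Longrightarrow> e \<in> E" using EHE by blast

lemma F:
  assumes v: "v \<in> VH - {u1,u2}" and e: "e \<in> E" "v \<in> e" shows "e \<in> EH"
proof -
  have sub: "{e\<in>EH. v \<in> e} \<subseteq> {e\<in>E. v \<in> e}" using v EH_E by auto
  have fin: "finite {e\<in>E. v \<in> e}" using finE by simp
  have "card {e\<in>EH. v \<in> e} = card {e\<in>E. v \<in> e}" using degeq[OF v] unfolding degree_def .
  then have "{e\<in>EH. v \<in> e} = {e\<in>E. v \<in> e}" using card_subset_eq[OF fin sub] by blast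
  then show ?thesis using e by blast
qed

lemma deg_bound:
  assumes "v \<in> W" "finite W" "\<forall>e\<in>EH. v \<in> e \<longrightarrow> e \<subseteq> W"
  shows "degree EH v \<le> card W - 1"
proof -
  have "{e\<in>EH. v \<in> e} \<subseteq> (\<lambda>w. {v,w}) ` (W - {v})"
  proof
    fix e assume "e \<in> {e\<in>EH. v \<in> e}"
    then have "e \<in> EH" "v \<in> e" by auto
    then obtain w where w: "w \<noteq> v" "e = {v,w}" using edge_form by blast
    then have "w \<in> W" using assms(3) \<open>e \<in> EH\<close> \<open>v \<in> e\<close> by blast
    then show "e \<in> (\<lambda>w. {v,w}) ` (W - {v})" using w by blast
  qed
  then have "card {e\<in>EH. v \<in> e} \<le> card ((\<lambda>w. {v,w}) ` (W - {v}))"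
    using assms(2) by (simp add: card_mono)
  also have "\<dots> \<le> card (W - {v})" using card_image_le assms(2) by blast
  also have "\<dots> = card W - 1" using assms(1,2) by simp
  finally show ?thesis unfolding degree_def .
qed

definition smaller_exists where
  "smaller_exists \<longleftrightarrow> (\<exists>VH' EH' w1 w2. smaller_two_contraction V E VH' EH' w1 w2 VH EH u1 u2)"

lemma piece0:
  assumes X: "X \<subseteq> VH" "X \<noteq> VH" "x \<in> X" "y \<in> X" "x \<noteq> y" "card X \<ge> 3"
    and dis: "(X - {x,y}) \<inter> {u1,u2} = {}"
    and cl: "\<forall>v\<in>X-{x,y}. \<forall>e\<in>EH. v \<in> e \<longrightarrow> e \<subseteq> X"
    and pth: "\<exists>xs. is_path V E xs x y \<and> set (butlast (tl xs)) \<subseteq> V - X"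
  shows smaller_exists
proof -
  define EH' where "EH' = {e\<in>EH. e \<subseteq> X} \<union> {{x,y}}"
  have finX: "finite X" using X(1) finVH finite_subset by blast
  have sgX: "sgraph X EH'"
    unfolding sgraph_def
  proof (rule conjI[OF finX], rule ballI)
    fix e assume "e \<in> EH'"
    then consider "e \<in> EH" "e \<subseteq> X" | "e = {x,y}" unfolding EH'_def by blast
    then show "e \<subseteq> X \<and> card e = 2"
    proof cases
      case 1 then show ?thesis using sgH unfolding sgraph_def by blast
    next
      case 2 then show ?thesis using X by auto
    qed
  qed
  have sub: "EH' - {{x,y}} \<subseteq> E"
  proof
    fix e assume e: "e \<in> EH' - {{x,y}}"
    then have eH: "e \<in> EH" "e \<subseteq> X" "e \<noteq> {x,y}" unfolding EH'_def by auto
    have "e \<noteq> {u1,u2}"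
    proof
      assume "e = {u1,u2}"
      then have "u1 \<in> X" "u2 \<in> X" using eH by auto
      then have "u1 \<in> {x,y}" "u2 \<in> {x,y}" using dis by auto
      then have "{u1,u2} = {x,y}" using neq by auto
      then show False using eH \<open>e = {u1,u2}\<close> by simp
    qed
    then show "e \<in> E" using EH_E eH by blast
  qed
  have deg: "\<forall>v\<in>X - {x,y}. degree EH' v = degree E v"
  proof
    fix v assume v: "v \<in> X - {x,y}"
    have "{e\<in>EH'. v \<in> e} = {e\<in>EH. v \<in> e}"
      using v cl unfolding EH'_def by auto
    then have "degree EH' v = degree EH v" unfolding degree_def by simp
    also have "\<dots> = degree E v" using degeq v X(1) dis by blast
    finally show "degree EH' v = degree E v" .
  qed
  have "two_contraction V E X EH' x y"
    unfolding two_contraction_def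
    using sgX X VHV sub deg pth unfolding EH'_def by blast
  moreover have "X \<subset> VH" using X by blast
  moreover have "(u1 \<notin> X \<or> u1 \<in> {x,y}) \<and> (u2 \<notin> X \<or> u2 \<in> {x,y})" using dis by blast
  ultimately show ?thesis unfolding smaller_exists_def smaller_two_contraction_def by blast
qed

lemma piece1:
  assumes C: "C \<subseteq> VH - {u1,u2}" "C \<noteq> {}" and x: "x \<in> VH - C"
    and cl: "\<forall>v\<in>C. \<forall>e\<in>EH. v \<in> e \<longrightarrow> e \<subseteq> C \<union> {x}"
  shows smaller_exists
proof -
  have "\<exists>c\<in>C. {x,c} \<in> EH"
  proof (rule ccontr)
    assume no: "\<not> (\<exists>c\<in>C. {x,c} \<in> EH)"
    obtain c0 where c0: "c0 \<in> C" using C by blast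
    have "u1 \<in> VH" using uE sgH unfolding sgraph_def by blast
    then have "c0 \<in> V" "u1 \<in> V" using c0 C VHV by auto
    then obtain xs where "is_path V E xs c0 u1" using conn unfolding connected_graph_def by blast
    then have r: "(c0,u1) \<in> (adjr V E)\<^sup>*" by (rule path_rtrancl)
    have "u1 \<in> C"
    proof (rule adjr_closed[OF r c0])
      fix v w assume v: "v \<in> C" and vw: "(v,w) \<in> adjr V E"
      then have "{v,w} \<in> E" unfolding adjr_def by blast
      then have "{v,w} \<in> EH" using F v C by blast
      then have "{v,w} \<subseteq> C \<union> {x}" using cl v by blast
      moreover have "w \<noteq> x" using no v \<open>{v,w} \<in> EH\<close> by (metis insert_commute)
      ultimately show "w \<in> C" by blast
    qed
    then show False using C by blast
  qed
  then obtain c where c: "c \<in> C" "{x,c} \<in> EH" by blast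
  define X where "X = C \<union> {x}"
  have finX: "finite X" unfolding X_def using C x finVH finite_subset by auto
  have clc: "\<forall>e\<in>EH. c \<in> e \<longrightarrow> e \<subseteq> X" using cl c unfolding X_def by blast
  have "degree EH c \<le> card X - 1" using deg_bound[OF _ finX clc] c unfolding X_def by blast
  moreover have "degree EH c \<ge> 5" using deg5 c C by blast
  ultimately have cX: "card X \<ge> 3" by linarith
  have xc: "x \<noteq> c" using x c by blast
  have "{x,c} \<noteq> {u1,u2}" using c C by auto
  then have "{x,c} \<in> E" using EH_E c by blast
  have "is_path V E [x,c] x c" using \<open>{x,c} \<in> E\<close> xc x c C VHV
    unfolding is_path_def by (auto simp: less_Suc_eq)
  then have pth: "\<exists>xs. is_path V E xs x c \<and> set (butlast (tl xs)) \<subseteq> V - X" by force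
  have "X \<noteq> VH"
  proof
    assume "X = VH"
    then have "u1 \<in> X" "u2 \<in> X" using uE sgH unfolding sgraph_def by auto
    then show False using C neq unfolding X_def by blast
  qed
  show ?thesis
  proof (rule piece0[OF _ \<open>X \<noteq> VH\<close> _ _ xc cX _ _ pth])
    show "X \<subseteq> VH" using C x unfolding X_def by blast
    show "x \<in> X" "c \<in> X" using c unfolding X_def by auto
    show "(X - {x, c}) \<inter> {u1, u2} = {}" using C unfolding X_def by blast
    show "\<forall>v\<in>X - {x, c}. \<forall>e\<in>EH. v \<in> e \<longrightarrow> e \<subseteq> X" using cl unfolding X_def by blast
  qed
qed


lemma piece2:
  assumes C: "C \<subseteq> VH - {u1,u2}" "C \<noteq> {}" and xy: "x \<in> VH - C" "y \<in> VH - C" "x \<noteq> y"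
    and cl: "\<forall>v\<in>C. \<forall>e\<in>EH. v \<in> e \<longrightarrow> e \<subseteq> C \<union> {x,y}"
    and r: "(x,y) \<in> (adjr (VH - C) EH)\<^sup>*" and z: "z \<in> VH - C - {x,y}"
  shows smaller_exists
proof -
  obtain P where P: "is_path V E P u1 u2" "set (butlast (tl P)) \<subseteq> V - VH" using Pth by blast
  have Pb: "P \<noteq> []" "hd P = u1" "last P = u2" "set P \<subseteq> V" using P(1) unfolding is_path_def by auto
  have "set P \<subseteq> V - C"
  proof
    fix p assume p: "p \<in> set P"
    then have "p \<in> {hd P, last P} \<union> set (butlast (tl P))" using set_path_cover[OF Pb(1)] by blast
    then have "p = u1 \<or> p = u2 \<or> p \<in> V - VH" using Pb P(2) by blast
    moreover have "p \<in> V" using p Pb by blast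
    ultimately show "p \<in> V - C" using C by blast
  qed
  then have "is_path (V - C) E P u1 u2" using P(1) unfolding is_path_def by blast
  then have pu: "(u1,u2) \<in> (adjr (V - C) E)\<^sup>*" by (rule path_rtrancl)
  have "adjr (VH - C) EH \<subseteq> (adjr (V - C) E)\<^sup>*"
  proof (rule subrelI)
    fix a b assume ab: "(a,b) \<in> adjr (VH - C) EH"
    then have abH: "{a,b} \<in> EH" "a \<in> VH - C" "b \<in> VH - C" unfolding adjr_def by auto
    show "(a,b) \<in> (adjr (V - C) E)\<^sup>*"
    proof (cases "{a,b} = {u1,u2}")
      case True
      then have "(a = u1 \<and> b = u2) \<or> (a = u2 \<and> b = u1)" by (simp add: doubleton_eq_iff)
      then show ?thesis using pu adjr_rtrancl_sym[OF pu] by blast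
    next
      case False
      then have "{a,b} \<in> E" using EH_E abH by blast
      then have "(a,b) \<in> adjr (V - C) E" using abH VHV unfolding adjr_def by blast
      then show ?thesis by blast
    qed
  qed
  then have "(adjr (VH - C) EH)\<^sup>* \<subseteq> (adjr (V - C) E)\<^sup>*" by (rule rtrancl_subset_rtrancl)
  then have r2: "(x,y) \<in> (adjr (V - C) E)\<^sup>*" using r by blast
  have "x \<in> V - C" "V - C \<subseteq> V" using xy VHV by auto
  then obtain xs where xs: "is_path V E xs x y" "set (butlast (tl xs)) \<subseteq> (V - C) - {x,y}"
    using rtrancl_ext_path[OF r2] by blast
  define X where "X = C \<union> {x,y}"
  have "(V - C) - {x,y} = V - X" unfolding X_def by blast
  then have pth: "\<exists>xs. is_path V E xs x y \<and> set (butlast (tl xs)) \<subseteq> V - X" using xs by auto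
  have XV: "X \<subseteq> VH" using C xy unfolding X_def by blast
  have finX: "finite X" using XV finVH finite_subset by blast
  obtain c where c: "c \<in> C" using C by blast
  have "{c,x,y} \<subseteq> X" using c unfolding X_def by blast
  moreover have "c \<noteq> x" "c \<noteq> y" using c xy by auto
  moreover have "card {c,x,y} = 3" using calculation(2,3) xy(3) by simp
  ultimately have cX: "card X \<ge> 3" using card_mono[OF finX, of "{c,x,y}"] by linarith
  have "X \<noteq> VH" using z unfolding X_def by blast
  show ?thesis
  proof (rule piece0[OF XV \<open>X \<noteq> VH\<close> _ _ xy(3) cX _ _ pth])
    show "x \<in> X" "y \<in> X" unfolding X_def by auto
    show "(X - {x, y}) \<inter> {u1, u2} = {}" using C unfolding X_def by blast
    show "\<forall>v\<in>X - {x, y}. \<forall>e\<in>EH. v \<in> e \<longrightarrow> e \<subseteq> X" using cl unfolding X_def by blast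
  qed
qed

lemma side:
  assumes C: "C \<subseteq> VH - {u1,u2}" "C \<noteq> {}" "C \<inter> {x,y} = {}" and xy: "x \<in> VH" "y \<in> VH" "x \<noteq> y"
    and cl: "\<forall>v\<in>C. \<forall>w. {v,w} \<in> EH \<longrightarrow> w \<in> C \<union> {x,y}"
    and ny: "(x,y) \<notin> (adjr (VH - C) EH)\<^sup>*"
    and nu: "(x,u1) \<notin> (adjr (VH - C) EH)\<^sup>*" "(x,u2) \<notin> (adjr (VH - C) EH)\<^sup>*"
  shows smaller_exists
proof -
  let ?T = "adjr (VH - C) EH"
  define K where "K = {w. (x,w) \<in> ?T\<^sup>*}"
  have xK: "x \<in> K" unfolding K_def by simp
  have xVC: "x \<in> VH - C" using xy C by blast
  have KV: "K \<subseteq> VH - C" using adjr_rtrancl_in[OF _ xVC] unfolding K_def by blast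
  have yK: "y \<notin> K" using ny unfolding K_def by blast
  have uK: "u1 \<notin> K" "u2 \<notin> K" using nu unfolding K_def by blast+
  have Kcl: "w \<in> K" if "v \<in> K" "{v,w} \<in> EH" "w \<notin> C" for v w
  proof -
    have "w \<in> VH" using edge_form[OF that(2)] by auto
    then have "(v,w) \<in> ?T" using that KV unfolding adjr_def by blast
    then show ?thesis using that(1) unfolding K_def by (simp add: rtrancl_into_rtrancl)
  qed
  have noC: "w \<notin> C" if "v \<in> K" "v \<noteq> x" "{v,w} \<in> EH" for v w
  proof
    assume "w \<in> C"
    moreover have "{w,v} \<in> EH" using that(3) by (simp add: insert_commute)
    ultimately have "v \<in> C \<union> {x,y}" using cl by blast
    then show False using that KV yK by blast
  qed
  show ?thesis
  proof (cases "K - {x} = {}")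
    case False
    show ?thesis
    proof (rule piece1[of "K - {x}" x])
      show "K - {x} \<subseteq> VH - {u1, u2}" using KV uK by blast
      show "K - {x} \<noteq> {}" by (rule False)
      show "x \<in> VH - (K - {x})" using xy by blast
      show "\<forall>v\<in>K - {x}. \<forall>e\<in>EH. v \<in> e \<longrightarrow> e \<subseteq> K - {x} \<union> {x}"
      proof (intro ballI impI)
        fix v e assume v: "v \<in> K - {x}" and e: "e \<in> EH" "v \<in> e"
        obtain w where w: "e = {v,w}" using edge_form[OF e] by blast
        have "w \<notin> C" using noC v e w by blast
        then have "w \<in> K" using Kcl v e w by blast
        then show "e \<subseteq> K - {x} \<union> {x}" using v w by blast
      qed
    qed
  next
    case True
    then have K1: "K = {x}" using xK by blast
    show ?thesis
    proof (rule piece1[of "C \<union> {x}" y])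
      show "C \<union> {x} \<subseteq> VH - {u1, u2}" using C xy xK uK by blast
      show "C \<union> {x} \<noteq> {}" by blast
      show "y \<in> VH - (C \<union> {x})" using xy C by blast
      show "\<forall>v\<in>C \<union> {x}. \<forall>e\<in>EH. v \<in> e \<longrightarrow> e \<subseteq> C \<union> {x} \<union> {y}"
      proof (intro ballI impI)
        fix v e assume v: "v \<in> C \<union> {x}" and e: "e \<in> EH" "v \<in> e"
        obtain w where w: "e = {v,w}" "w \<noteq> v" using edge_form[OF e] by blast
        show "e \<subseteq> C \<union> {x} \<union> {y}"
        proof (cases "v \<in> C")
          case True
          then have "w \<in> C \<union> {x,y}" using cl e w by blast
          then show ?thesis using w True by blast
        next
          case False
          then have vx: "v = x" using v by blast
          have "w \<in> C"
          proof (rule ccontr)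
            assume "w \<notin> C"
            then have "w \<in> K" using Kcl[of v w] vx xK e w by blast
            then show False using K1 w vx by blast
          qed
          then show ?thesis using w vx by blast
        qed
      qed
    qed
  qed
qed

lemma card_le2_cases:
  assumes "finite S" "card S \<le> 2"
  shows "S = {} \<or> (\<exists>x. S = {x}) \<or> (\<exists>x y. x \<noteq> y \<and> S = {x,y})"
proof -
  have "card S = 0 \<or> card S = 1 \<or> card S = 2" using assms(2) by linarith
  then show ?thesis
  proof (elim disjE)
    assume "card S = 0" then show ?thesis using assms(1) by simp
  next
    assume "card S = 1" then show ?thesis by (simp add: card_1_singleton_iff)
  next
    assume "card S = 2" then show ?thesis by (meson card_2_iff)
  qed
qed

lemma comp:
  assumes S: "S \<subseteq> VH" "card S \<le> 2" and C: "C \<subseteq> VH - S" "C \<inter> {u1,u2} = {}" "C \<noteq> {}"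
    and cl: "\<forall>v\<in>C. \<forall>w. {v,w} \<in> EH \<longrightarrow> w \<in> C \<union> S" and z: "z \<in> VH - S - C"
  shows smaller_exists
proof -
  have C': "C \<subseteq> VH - {u1,u2}" using C by blast
  have cle: "\<forall>v\<in>C. \<forall>e\<in>EH. v \<in> e \<longrightarrow> e \<subseteq> C \<union> S"
  proof (intro ballI impI)
    fix v e assume v: "v \<in> C" and e: "e \<in> EH" "v \<in> e"
    obtain w where w: "e = {v,w}" using edge_form[OF e] by blast
    then show "e \<subseteq> C \<union> S" using cl v e by blast
  qed
  have finS: "finite S" using S finVH finite_subset by blast
  have u1V: "u1 \<in> VH" using uE sgH unfolding sgraph_def by blast
  have u2V: "u2 \<in> VH" using uE sgH unfolding sgraph_def by blast
  consider "S = {}" | x where "S = {x}" | x y where "x \<noteq> y" "S = {x,y}"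
    using card_le2_cases[OF finS S(2)] by blast
  then show ?thesis
  proof cases
    case 1
    have "u1 \<in> VH - C" using u1V C(2) by blast
    moreover have "\<forall>v\<in>C. \<forall>e\<in>EH. v \<in> e \<longrightarrow> e \<subseteq> C \<union> {u1}" using cle 1 by blast
    ultimately show ?thesis using piece1[OF C' C(3)] by blast
  next
    case (2 x)
    have "x \<in> VH - C" using S C(1) 2 by blast
    moreover have "\<forall>v\<in>C. \<forall>e\<in>EH. v \<in> e \<longrightarrow> e \<subseteq> C \<union> {x}" using cle 2 by blast
    ultimately show ?thesis using piece1[OF C' C(3)] by blast
  next
    case (3 x y)
    let ?T = "adjr (VH - C) EH"
    have xy: "x \<in> VH" "y \<in> VH" using S 3 by auto
    have CS: "C \<inter> {x,y} = {}" using C 3 by blast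
    have clxy: "\<forall>v\<in>C. \<forall>w. {v,w} \<in> EH \<longrightarrow> w \<in> C \<union> {x,y}" using cl 3 by simp
    have uC: "u1 \<in> VH - C" "u2 \<in> VH - C" using u1V u2V C(2) by blast+
    have u12: "(u1,u2) \<in> ?T" "(u2,u1) \<in> ?T" using uE uC unfolding adjr_def
      by (auto simp: insert_commute)
    show ?thesis
    proof (cases "(x,y) \<in> ?T\<^sup>*")
      case True
      have "x \<in> VH - C" "y \<in> VH - C" using xy CS by blast+
      moreover have "\<forall>v\<in>C. \<forall>e\<in>EH. v \<in> e \<longrightarrow> e \<subseteq> C \<union> {x,y}" using cle 3 by blast
      moreover have "z \<in> VH - C - {x,y}" using z 3 by blast
      ultimately show ?thesis using piece2[OF C' C(3) _ _ 3(1) _ True] by blast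
    next
      case nxy: False
      show ?thesis
      proof (cases "(x,u1) \<in> ?T\<^sup>*")
        case False
        have "(x,u2) \<notin> ?T\<^sup>*"
        proof
          assume "(x,u2) \<in> ?T\<^sup>*"
          then have "(x,u1) \<in> ?T\<^sup>*" using rtrancl_into_rtrancl[OF _ u12(2)] by blast
          then show False using False by blast
        qed
        then show ?thesis using side[OF C' C(3) CS xy 3(1) clxy nxy False] by blast
      next
        case True
        have n1: "(y,u1) \<notin> ?T\<^sup>*"
        proof
          assume "(y,u1) \<in> ?T\<^sup>*"
          then have "(u1,y) \<in> ?T\<^sup>*" by (rule adjr_rtrancl_sym)
          then have "(x,y) \<in> ?T\<^sup>*" using rtrancl_trans[OF True] by blast
          then show False using nxy by blast
        qed
        have n2: "(y,u2) \<notin> ?T\<^sup>*"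
        proof
          assume "(y,u2) \<in> ?T\<^sup>*"
          then have "(y,u1) \<in> ?T\<^sup>*" using rtrancl_into_rtrancl[OF _ u12(2)] by blast
          then show False using n1 by blast
        qed
        have nyx: "(y,x) \<notin> ?T\<^sup>*"
        proof
          assume "(y,x) \<in> ?T\<^sup>*"
          then have "(x,y) \<in> ?T\<^sup>*" by (rule adjr_rtrancl_sym)
          then show False using nxy by blast
        qed
        have CS': "C \<inter> {y,x} = {}" using CS by blast
        have clyx: "\<forall>v\<in>C. \<forall>w. {v,w} \<in> EH \<longrightarrow> w \<in> C \<union> {y,x}" using clxy by blast
        have yx: "y \<noteq> x" using 3(1) by blast
        show ?thesis using side[OF C' C(3) CS' xy(2,1) yx clyx nyx n1 n2] .
      qed
    qed
  qed
qed

lemma sep: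
  assumes S: "S \<subseteq> VH" "card S \<le> 2" and ab: "a \<in> VH - S" "b \<in> VH - S"
    and nab: "(a,b) \<notin> (adjr (VH - S) EH)\<^sup>*"
  shows smaller_exists
proof -
  let ?R = "adjr (VH - S) EH"
  have compf: "{w. (p,w) \<in> ?R\<^sup>*} \<subseteq> VH - S \<and>
      (\<forall>v\<in>{w. (p,w) \<in> ?R\<^sup>*}. \<forall>w. {v,w} \<in> EH \<longrightarrow> w \<in> {w. (p,w) \<in> ?R\<^sup>*} \<union> S)"
    if p: "p \<in> VH - S" for p
  proof
    show "{w. (p,w) \<in> ?R\<^sup>*} \<subseteq> VH - S" using adjr_rtrancl_in[OF _ p] by blast
    show "\<forall>v\<in>{w. (p,w) \<in> ?R\<^sup>*}. \<forall>w. {v,w} \<in> EH \<longrightarrow> w \<in> {w. (p,w) \<in> ?R\<^sup>*} \<union> S"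
    proof (intro ballI allI impI)
      fix v w assume v: "v \<in> {w. (p,w) \<in> ?R\<^sup>*}" and e: "{v,w} \<in> EH"
      have vV: "v \<in> VH - S" using v adjr_rtrancl_in[OF _ p] by blast
      have "w \<in> VH" using edge_form[OF e] by auto
      show "w \<in> {w. (p,w) \<in> ?R\<^sup>*} \<union> S"
      proof (cases "w \<in> S")
        case False
        then have "(v,w) \<in> ?R" using vV \<open>w \<in> VH\<close> e unfolding adjr_def by blast
        then show ?thesis using v by (simp add: rtrancl_into_rtrancl)
      qed simp
    qed
  qed
  define Ca where "Ca = {w. (a,w) \<in> ?R\<^sup>*}"
  define Cb where "Cb = {w. (b,w) \<in> ?R\<^sup>*}"
  have aCa: "a \<in> Ca" unfolding Ca_def by simp
  have bCb: "b \<in> Cb" unfolding Cb_def by simp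
  have bCa: "b \<notin> Ca" using nab unfolding Ca_def by blast
  have aCb: "a \<notin> Cb"
  proof
    assume "a \<in> Cb"
    then have "(b,a) \<in> ?R\<^sup>*" unfolding Cb_def by blast
    then have "(a,b) \<in> ?R\<^sup>*" by (rule adjr_rtrancl_sym)
    then show False using nab by blast
  qed
  show ?thesis
  proof (cases "Ca \<inter> {u1,u2} = {}")
    case True
    have "Ca \<subseteq> VH - S" "\<forall>v\<in>Ca. \<forall>w. {v,w} \<in> EH \<longrightarrow> w \<in> Ca \<union> S"
      using compf[OF ab(1)] unfolding Ca_def by blast+
    moreover have "Ca \<noteq> {}" using aCa by blast
    moreover have "b \<in> VH - S - Ca" using ab bCa by blast
    ultimately show ?thesis using comp[OF S _ True] by blast
  next
    case False
    then obtain u where u: "u \<in> Ca" "u \<in> {u1,u2}" by blast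
    have "Cb \<inter> {u1,u2} = {}"
    proof (rule ccontr)
      assume "Cb \<inter> {u1,u2} \<noteq> {}"
      then obtain u' where u': "u' \<in> Cb" "u' \<in> {u1,u2}" by blast
      have uV: "u \<in> VH - S" "u' \<in> VH - S"
        using u u' compf[OF ab(1)] compf[OF ab(2)] unfolding Ca_def Cb_def by blast+
      have "(u,u') \<in> ?R\<^sup>*"
      proof (cases "u = u'")
        case False
        then have "{u,u'} = {u1,u2}" using u u' by auto
        then have "(u,u') \<in> ?R" using uE uV unfolding adjr_def by auto
        then show ?thesis by blast
      qed simp
      moreover have "(a,u) \<in> ?R\<^sup>*" using u unfolding Ca_def by blast
      ultimately have "(a,u') \<in> ?R\<^sup>*" using rtrancl_trans by fast
      moreover have "(b,u') \<in> ?R\<^sup>*" using u' unfolding Cb_def by blast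
      then have "(u',b) \<in> ?R\<^sup>*" by (rule adjr_rtrancl_sym)
      ultimately have "(a,b) \<in> ?R\<^sup>*" using rtrancl_trans by fast
      then show False using nab by blast
    qed
    moreover have "Cb \<subseteq> VH - S" "\<forall>v\<in>Cb. \<forall>w. {v,w} \<in> EH \<longrightarrow> w \<in> Cb \<union> S"
      using compf[OF ab(2)] unfolding Cb_def by blast+
    moreover have "Cb \<noteq> {}" using bCb by blast
    moreover have "a \<in> VH - S - Cb" using ab aCb by blast
    ultimately show ?thesis using comp[OF S] by blast
  qed
qed

lemma main: "k_connected 3 VH EH \<or> smaller_exists"
proof (rule disjCI)
  assume ns: "\<not> smaller_exists"
  have c4: "card VH > 3"
  proof (rule ccontr)
    assume "\<not> card VH > 3"
    then have c: "card VH = 3" using c3 by linarith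
    have "\<not> VH \<subseteq> {u1,u2}"
    proof
      assume "VH \<subseteq> {u1,u2}"
      then have "card VH \<le> card {u1,u2}" by (simp add: card_mono)
      also have "\<dots> \<le> 2" by (simp add: card_insert_le_m1)
      finally show False using c by simp
    qed
    then obtain w where w: "w \<in> VH - {u1,u2}" by blast
    have "\<forall>e\<in>EH. w \<in> e \<longrightarrow> e \<subseteq> VH" using sgH unfolding sgraph_def by blast
    then have "degree EH w \<le> card VH - 1" using deg_bound[of w VH] w finVH by blast
    then show False using deg5[OF w] c by simp
  qed
  have "\<forall>S. S \<subseteq> VH \<and> card S < 3 \<longrightarrow> connected_graph (VH - S) {e\<in>EH. e \<inter> S = {}}"
  proof (intro allI impI)
    fix S assume S: "S \<subseteq> VH \<and> card S < 3"
    have eq: "adjr (VH - S) {e\<in>EH. e \<inter> S = {}} = adjr (VH - S) EH" unfolding adjr_def by auto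
    have ne: "VH - S \<noteq> {}"
    proof
      assume "VH - S = {}"
      then have "VH \<subseteq> S" by blast
      then have "card VH \<le> card S" using S finVH finite_subset card_mono by metis
      then show False using S c4 by linarith
    qed
    have "\<exists>xs. is_path (VH - S) {e\<in>EH. e \<inter> S = {}} xs a b"
      if ab: "a \<in> VH - S" "b \<in> VH - S" for a b
    proof -
      have "(a,b) \<in> (adjr (VH - S) EH)\<^sup>*"
        using sep[of S a b] S ab ns by linarith
      then show ?thesis using rtrancl_path[of a b "VH - S" "{e\<in>EH. e \<inter> S = {}}"] ab eq by simp
    qed
    then show "connected_graph (VH - S) {e\<in>EH. e \<inter> S = {}}"
      unfolding connected_graph_def using ne by blast
  qed
  then show "k_connected 3 VH EH" unfolding k_connected_def using c4 by blast
qed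

end

theorem claim8:
  fixes V :: "'a set" and E :: "'a set set" and VH :: "'a set" and EH :: "'a set set"
    and u1 u2 :: 'a
  assumes "sgraph V E"
    and "connected_graph V E"
    and "planar V E"
    and "minimal_two_contraction V E VH EH u1 u2"
  shows "(\<exists>v \<in> VH - {u1, u2}. degree EH v \<le> 4) \<or> k_connected 3 VH EH"
proof (cases "\<exists>v \<in> VH - {u1, u2}. degree EH v \<le> 4")
  case True then show ?thesis by blast
next
  case False
  then have d5: "\<And>v. v \<in> VH - {u1,u2} \<Longrightarrow> degree EH v \<ge> 5" by force
  have tc: "two_contraction V E VH EH u1 u2"
    and ns: "\<not> (\<exists>VH' EH' w1 w2. smaller_two_contraction V E VH' EH' w1 w2 VH EH u1 u2)"
    using assms(4) unfolding minimal_two_contraction_def by blast+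
  interpret setting V E VH EH u1 u2 unfolding setting_def using assms(1,2) tc d5 by blast
  show ?thesis using main ns unfolding smaller_exists_def by blast
qed
end
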